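(* Every $L_1$-embeddable diversity can be isometrically embedded in a measure diversity.
   Context: A diversity on a set $X$ is a function $\delta$ from finite subsets of $X$ to $\mathbb{R}$ with $\delta(A)\ge 0$, $\delta(A)=0$ whenever $|A|\le 1$ (values $0$ on larger sets are allowed), and $\delta(A\cup B)+\delta(B\cup C)\ge\delta(A\cup C)$ for all finite $A,B,C$ with $B\neq\emptyset$. For a measure space $(\Omega,\mathcal{A},\mu)$, the $L_1$ diversity is $(L_1(\Omega,\mu),\delta_1)$ with $\delta_1(F)=\int_\Omega\max\{|f(\omega)-g(\omega)|:f,g\in F\}\,d\mu(\omega)$ for finite $F$. A diversity $(X,\delta)$ is $L_1$-embeddable if there is a map $\phi$ from $X$ into some $L_1$ diversity with $\delta_1(\phi(A))=\delta(A)$ for all finite $A\subseteq X$ (an isometric embedding). Measure diversity: for a measure space $(M,\Sigma,\mu)$, the set is the collection of sets in $\Sigma$ of finite measure and $\delta(\{E_1,\dots,E_k\})=\mu(\bigcup_iE_i\setminus\bigcap_iE_i)$. *)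

theory Defs
  imports "HOL-Analysis.Analysis"
begin

definition is_diversity :: "'a set \<Rightarrow> ('a set \<Rightarrow> real) \<Rightarrow> bool" where
  "is_diversity X \<delta> \<longleftrightarrow>
     (\<forall>A. finite A \<and> A \<subseteq> X \<longrightarrow> \<delta> A \<ge> 0) \<and>
     (\<forall>A. finite A \<and> A \<subseteq> X \<and> card A \<le> 1 \<longrightarrow> \<delta> A = 0) \<and>
     (\<forall>A B C. finite A \<and> finite B \<and> finite C \<and> A \<subseteq> X \<and> B \<subseteq> X \<and> C \<subseteq> X \<and> B \<noteq> {}
        \<longrightarrow> \<delta> (A \<union> C) \<le> \<delta> (A \<union> B) + \<delta> (B \<union> C))"

definition L1_div :: "'b measure \<Rightarrow> ('b \<Rightarrow> real) set \<Rightarrow> real" where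
  "L1_div M F = (if F = {} then 0 else
     (\<integral>\<omega>. Max {\<bar>f \<omega> - g \<omega>\<bar> | f g. f \<in> F \<and> g \<in> F} \<partial>M))"

definition L1_isometric_embedding ::
  "'b measure \<Rightarrow> 'a set \<Rightarrow> ('a set \<Rightarrow> real) \<Rightarrow> ('a \<Rightarrow> 'b \<Rightarrow> real) \<Rightarrow> bool" where
  "L1_isometric_embedding M X \<delta> \<phi> \<longleftrightarrow>
     (\<forall>x\<in>X. integrable M (\<phi> x)) \<and>
     (\<forall>A. finite A \<and> A \<subseteq> X \<longrightarrow> L1_div M (\<phi> ` A) = \<delta> A)"

definition measure_div :: "'c measure \<Rightarrow> 'c set set \<Rightarrow> real" where
  "measure_div N \<E> = measure N (\<Union>\<E> - \<Inter>\<E>)"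

definition measure_div_isometric_embedding ::
  "'c measure \<Rightarrow> 'a set \<Rightarrow> ('a set \<Rightarrow> real) \<Rightarrow> ('a \<Rightarrow> 'c set) \<Rightarrow> bool" where
  "measure_div_isometric_embedding N X \<delta> \<psi> \<longleftrightarrow>
     (\<forall>x\<in>X. \<psi> x \<in> sets N \<and> emeasure N (\<psi> x) < \<infinity>) \<and>
     (\<forall>A. finite A \<and> A \<subseteq> X \<longrightarrow> measure_div N (\<psi> ` A) = \<delta> A)"

end

theory Submission imports Defs begin

lemma band:
  fixes g h :: "'b \<Rightarrow> real"
  assumes [measurable]: "g \<in> borel_measurable M" "h \<in> borel_measurable M"
  shows "{p \<in> space M \<times> UNIV. g (fst p) \<le> snd p \<and> snd p < h (fst p)} \<in> sets (M \<Otimes>\<^sub>M lborel)"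
    and "emeasure (M \<Otimes>\<^sub>M lborel) {p \<in> space M \<times> UNIV. g (fst p) \<le> snd p \<and> snd p < h (fst p)}
         = (\<integral>\<^sup>+\<omega>. ennreal (h \<omega> - g \<omega>) \<partial>M)"
proof -
  have eq: "{p \<in> space M \<times> UNIV. g (fst p) \<le> snd p \<and> snd p < h (fst p)}
     = {p \<in> space (M \<Otimes>\<^sub>M lborel). g (fst p) \<le> snd p \<and> snd p < h (fst p)}"
    by (simp add: space_pair_measure)
  show S: "{p \<in> space M \<times> UNIV. g (fst p) \<le> snd p \<and> snd p < h (fst p)} \<in> sets (M \<Otimes>\<^sub>M lborel)"
    unfolding eq by measurable
  show "emeasure (M \<Otimes>\<^sub>M lborel) {p \<in> space M \<times> UNIV. g (fst p) \<le> snd p \<and> snd p < h (fst p)}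
         = (\<integral>\<^sup>+\<omega>. ennreal (h \<omega> - g \<omega>) \<partial>M)"
    apply (subst lborel.emeasure_pair_measure_alt[OF S])
  proof (rule nn_integral_cong)
    fix x assume x: "x \<in> space M"
    have pre: "Pair x -` {p \<in> space M \<times> UNIV. g (fst p) \<le> snd p \<and> snd p < h (fst p)} = {g x..<h x}"
      using x by auto
    show "emeasure lborel (Pair x -` {p \<in> space M \<times> UNIV. g (fst p) \<le> snd p \<and> snd p < h (fst p)}) = ennreal (h x - g x)"
      unfolding pre by (cases "g x \<le> h x") (auto simp: ennreal_neg)
  qed
qed

lemma maxdiff:
  fixes S :: "real set"
  assumes "finite S" "S \<noteq> {}"
  shows "Max {\<bar>a - b\<bar> | a b. a \<in> S \<and> b \<in> S} = Max S - Min S"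
proof -
  have fin: "finite {\<bar>a - b\<bar> | a b. a \<in> S \<and> b \<in> S}"
    using assms(1) by (simp add: finite_image_set2)
  show ?thesis
  proof (rule antisym)
    show "Max {\<bar>a - b\<bar> | a b. a \<in> S \<and> b \<in> S} \<le> Max S - Min S"
      using assms fin by (auto intro!: Max.boundedI simp: abs_le_iff)
        (smt (verit) Max_ge Min_le assms(1))+
    have "Max S \<in> S" "Min S \<in> S" using assms by auto
    then have "\<bar>Max S - Min S\<bar> \<in> {\<bar>a - b\<bar> | a b. a \<in> S \<and> b \<in> S}" by blast
    then have "\<bar>Max S - Min S\<bar> \<le> Max {\<bar>a - b\<bar> | a b. a \<in> S \<and> b \<in> S}" using fin by simp
    then show "Max S - Min S \<le> Max {\<bar>a - b\<bar> | a b. a \<in> S \<and> b \<in> S}" by simp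
  qed
qed

theorem proposition8:
  fixes X :: "'a set" and \<delta> :: "'a set \<Rightarrow> real"
    and M :: "'b measure" and \<phi> :: "'a \<Rightarrow> 'b \<Rightarrow> real"
  assumes "is_diversity X \<delta>"
    and "L1_isometric_embedding M X \<delta> \<phi>"
  shows "\<exists>(N :: ('b \<times> real) measure) \<psi>. measure_div_isometric_embedding N X \<delta> \<psi>"
proof -
  have int: "\<And>x. x \<in> X \<Longrightarrow> integrable M (\<phi> x)"
    and L1: "\<And>A. finite A \<Longrightarrow> A \<subseteq> X \<Longrightarrow> L1_div M (\<phi> ` A) = \<delta> A"
    using assms(2) unfolding L1_isometric_embedding_def by auto
  have meas: "\<And>x. x \<in> X \<Longrightarrow> \<phi> x \<in> borel_measurable M" using int by auto
  have d0: "\<delta> {} = 0" using assms(1) unfolding is_diversity_def by auto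
  define \<psi> where "\<psi> x = {p \<in> space M \<times> UNIV. (0 \<le> snd p \<and> snd p < \<phi> x (fst p)) \<or> (snd p < 0 \<and> \<phi> x (fst p) \<le> snd p)}" for x
  let ?N = "M \<Otimes>\<^sub>M lborel"
  have psi_eq: "\<psi> x = {p \<in> space M \<times> UNIV. min 0 (\<phi> x (fst p)) \<le> snd p \<and> snd p < max 0 (\<phi> x (fst p))}" for x
    unfolding \<psi>_def by auto
  have "measure_div_isometric_embedding ?N X \<delta> \<psi>"
    unfolding measure_div_isometric_embedding_def
  proof safe
    fix x assume x: "x \<in> X"
    note [measurable] = meas[OF x]
    have m1: "(\<lambda>\<omega>. min 0 (\<phi> x \<omega>)) \<in> borel_measurable M" "(\<lambda>\<omega>. max 0 (\<phi> x \<omega>)) \<in> borel_measurable M"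
      by measurable
    show "\<psi> x \<in> sets ?N" unfolding psi_eq by (rule band(1)[OF m1])
    have "emeasure ?N (\<psi> x) = (\<integral>\<^sup>+\<omega>. ennreal (max 0 (\<phi> x \<omega>) - min 0 (\<phi> x \<omega>)) \<partial>M)"
      unfolding psi_eq by (rule band(2)[OF m1])
    also have "\<dots> = (\<integral>\<^sup>+\<omega>. ennreal (norm (\<phi> x \<omega>)) \<partial>M)"
      by (rule nn_integral_cong) (auto simp: max_def min_def)
    also have "\<dots> < \<infinity>" using int[OF x] by (simp add: integrable_iff_bounded)
    finally show "emeasure ?N (\<psi> x) < \<infinity>" .
  next
    fix A assume A: "finite A" "A \<subseteq> X"
    show "measure_div ?N (\<psi> ` A) = \<delta> A"
    proof (cases "A = {}")
      case True then show ?thesis by (simp add: measure_div_def d0)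
    next
      case ne: False
      have [measurable]: "\<And>x. x \<in> A \<Longrightarrow> \<phi> x \<in> borel_measurable M" using A meas by auto
      have m1: "(\<lambda>\<omega>. Min ((\<lambda>x. \<phi> x \<omega>) ` A)) \<in> borel_measurable M"
           "(\<lambda>\<omega>. Max ((\<lambda>x. \<phi> x \<omega>) ` A)) \<in> borel_measurable M"
        using A(1) by measurable
      have set_eq: "\<Union>(\<psi> ` A) - \<Inter>(\<psi> ` A) = {p \<in> space M \<times> UNIV.
           Min ((\<lambda>x. \<phi> x (fst p)) ` A) \<le> snd p \<and> snd p < Max ((\<lambda>x. \<phi> x (fst p)) ` A)}"
      proof (intro set_eqI)
        fix p :: "'b \<times> real"
        obtain \<omega> t where p: "p = (\<omega>, t)" by force
        show "p \<in> \<Union>(\<psi> ` A) - \<Inter>(\<psi> ` A) \<longleftrightarrow> p \<in> {p \<in> space M \<times> UNIV.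
           Min ((\<lambda>x. \<phi> x (fst p)) ` A) \<le> snd p \<and> snd p < Max ((\<lambda>x. \<phi> x (fst p)) ` A)}"
          unfolding p using A(1) ne
          by (cases "0 \<le> t") (auto simp: \<psi>_def Max_gr_iff Min_gr_iff Max_le_iff Min_le_iff not_less; force)+
      qed
      have "measure_div ?N (\<psi> ` A) = enn2real (\<integral>\<^sup>+\<omega>. ennreal (Max ((\<lambda>x. \<phi> x \<omega>) ` A) - Min ((\<lambda>x. \<phi> x \<omega>) ` A)) \<partial>M)"
        unfolding measure_div_def measure_def set_eq band(2)[OF m1] ..
      also have "\<dots> = (\<integral>\<omega>. Max ((\<lambda>x. \<phi> x \<omega>) ` A) - Min ((\<lambda>x. \<phi> x \<omega>) ` A) \<partial>M)"
        by (rule enn2real_nn_integral_eq_integral) (use A(1) ne m1 in \<open>auto simp: Min_le_iff ex_in_conv[symmetric]\<close>)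
      also have "\<dots> = L1_div M (\<phi> ` A)"
        unfolding L1_div_def using ne
      proof (simp, intro Bochner_Integration.integral_cong refl)
        fix \<omega>
        have "{\<bar>f \<omega> - g \<omega>\<bar> |f g. f \<in> \<phi> ` A \<and> g \<in> \<phi> ` A}
            = {\<bar>a - b\<bar> | a b. a \<in> (\<lambda>x. \<phi> x \<omega>) ` A \<and> b \<in> (\<lambda>x. \<phi> x \<omega>) ` A}" by blast
        then show "Max ((\<lambda>x. \<phi> x \<omega>) ` A) - Min ((\<lambda>x. \<phi> x \<omega>) ` A)
           = Max {\<bar>f \<omega> - g \<omega>\<bar> |f g. f \<in> \<phi> ` A \<and> g \<in> \<phi> ` A}"
          using maxdiff[of "(\<lambda>x. \<phi> x \<omega>) ` A"] A(1) ne by simp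
      qed
      also have "\<dots> = \<delta> A" using L1 A by simp
      finally show ?thesis .
    qed
  qed
  then show ?thesis by blast
qed

end
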